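(* Let $f\not\equiv 0$ be an odd entire function such that for all $x,y,z,w\in\mathbb{C}$ $$f(x)f(y)f(z)f(w)-f\Big(\tfrac{x+y+z-w}{2}\Big)f\Big(\tfrac{x+y-z+w}{2}\Big)f\Big(\tfrac{x-y+z+w}{2}\Big)f\Big(\tfrac{-x+y+z+w}{2}\Big)$$ $$-f\Big(\tfrac{x+y+z+w}{2}\Big)f\Big(\tfrac{x+y-z-w}{2}\Big)f\Big(\tfrac{x-y+z-w}{2}\Big)f\Big(\tfrac{x-y-z+w}{2}\Big)=0.$$ Then $f$ satisfies $$(f'(0))^3 f(2z)=f(z)^4\,(\ln f(z))''' \quad\text{for all } z,$$ where $(\ln f)'''$ denotes the meromorphic function $(f'/f)''$; equivalently $(f'(0))^3f(2z)=f^3f'''-3f^2f'f''+2f(f')^3$ with $f=f(z)$. *)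

theory Defs
  imports "HOL-Analysis.Analysis"
begin

end

theory Submission
  imports Defs "HOL-Complex_Analysis.Complex_Analysis"
begin
lemma Dlin:
  assumes "f holomorphic_on UNIV"
  shows "(deriv ^^ n) (\<lambda>w. f (u*w+c)) x = u^n * (deriv ^^ n) f (u*x+c)"
  by (rule higher_deriv_compose_linear'[OF assms, where S=UNIV]) auto

lemma hol_lin:
  assumes "f holomorphic_on UNIV"
  shows "(\<lambda>w. f (u*w+c)) holomorphic_on UNIV"
proof -
  have "(f \<circ> (\<lambda>w. u*w+c)) holomorphic_on UNIV"
    by (rule holomorphic_on_compose) (auto intro!: holomorphic_intros holomorphic_on_subset[OF assms])
  then show ?thesis by (simp add: o_def)
qed

lemma M:
  assumes g: "g holomorphic_on UNIV" and h: "h holomorphic_on UNIV"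
  shows "(deriv ^^ 1) (\<lambda>w. g w * h w) x = (deriv ^^ 1) g x * h x + g x * (deriv ^^ 1) h x"
    "(deriv ^^ 2) (\<lambda>w. g w * h w) x = (deriv ^^ 2) g x * h x + 2 * (deriv ^^ 1) g x * (deriv ^^ 1) h x + g x * (deriv ^^ 2) h x"
    "(deriv ^^ 3) (\<lambda>w. g w * h w) x = (deriv ^^ 3) g x * h x + 3 * (deriv ^^ 2) g x * (deriv ^^ 1) h x
       + 3 * (deriv ^^ 1) g x * (deriv ^^ 2) h x + g x * (deriv ^^ 3) h x"
  using higher_deriv_mult[OF g h, of x 1] higher_deriv_mult[OF g h, of x 2] higher_deriv_mult[OF g h, of x 3]
  by (simp_all add: numeral_3_eq_3 numeral_2_eq_2 algebra_simps)

theorem lemma4: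
  fixes f :: "complex \<Rightarrow> complex"
  assumes entire: "f holomorphic_on UNIV"
    and odd: "\<And>z. f (- z) = - f z"
    and nonzero: "\<exists>z. f z \<noteq> 0"
    and feq: "\<And>x y z w.
      f x * f y * f z * f w
      - f ((x + y + z - w) / 2) * f ((x + y - z + w) / 2) * f ((x - y + z + w) / 2) * f ((- x + y + z + w) / 2)
      - f ((x + y + z + w) / 2) * f ((x + y - z - w) / 2) * f ((x - y + z - w) / 2) * f ((x - y - z + w) / 2) = 0"
  shows "\<And>z. (deriv f 0) ^ 3 * f (2 * z) =
      f z ^ 3 * (deriv ^^ 3) f z - 3 * f z ^ 2 * deriv f z * (deriv ^^ 2) f z
      + 2 * f z * (deriv f z) ^ 3"
proof -
  fix z :: complex
  have f0: "f 0 = 0" using odd[of 0] by simp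
  define A where "A = (\<lambda>t. f (1*t + 2*z))"
  define BB where "BB = (\<lambda>t. f t * f t)"
  define B where "B = (\<lambda>t. f t * BB t)"
  define C where "C = (\<lambda>t. f (2*t + z))"
  define P where "P = (\<lambda>t. f (1*t + z))"
  define N where "N = (\<lambda>t. f ((-1)*t + z))"
  define PP where "PP = (\<lambda>t. P t * P t)"
  define PPP where "PPP = (\<lambda>t. P t * PP t)"
  define k where "k = f z * (f z * f z)"
  have hA: "A holomorphic_on UNIV" unfolding A_def by (rule hol_lin[OF entire])
  have hC: "C holomorphic_on UNIV" unfolding C_def by (rule hol_lin[OF entire])
  have hP: "P holomorphic_on UNIV" unfolding P_def by (rule hol_lin[OF entire])
  have hN: "N holomorphic_on UNIV" unfolding N_def by (rule hol_lin[OF entire])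
  have hBB: "BB holomorphic_on UNIV" unfolding BB_def by (intro holomorphic_intros entire)
  have hB: "B holomorphic_on UNIV" unfolding B_def using hBB by (intro holomorphic_intros entire)
  have hPP: "PP holomorphic_on UNIV" unfolding PP_def using hP by (intro holomorphic_intros)
  have hPPP: "PPP holomorphic_on UNIV" unfolding PPP_def using hP hPP by (intro holomorphic_intros)
  have hkC: "(\<lambda>t. k * C t) holomorphic_on UNIV" using hC by (intro holomorphic_intros)
  have hPN: "(\<lambda>t. PPP t * N t) holomorphic_on UNIV" using hPPP hN by (intro holomorphic_intros)
  have E: "A t * B t = k * C t - PPP t * N t" for t
  proof -
    have "f (z+t) * f (z+t) * f (z+t) * f (z-t)
      - f (z + 2*t) * f z * f z * f z
      - f (2*z+t) * f t * f t * f (-t) = 0"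
    proof -
      have a1: "(z + t + (z + t) + (z + t) - (z - t)) / 2 = z + 2*t" by (simp add: field_simps)
      have a2: "(z + t + (z + t) - (z + t) + (z - t)) / 2 = z" by (simp add: field_simps)
      have a3: "(z + t - (z + t) + (z + t) + (z - t)) / 2 = z" by (simp add: field_simps)
      have a4: "(- (z + t) + (z + t) + (z + t) + (z - t)) / 2 = z" by (simp add: field_simps)
      have a5: "(z + t + (z + t) + (z + t) + (z - t)) / 2 = 2*z + t" by (simp add: field_simps)
      have a6: "(z + t + (z + t) - (z + t) - (z - t)) / 2 = t" by (simp add: field_simps)
      have a7: "(z + t - (z + t) + (z + t) - (z - t)) / 2 = t" by (simp add: field_simps)
      have a8: "(z + t - (z + t) - (z + t) + (z - t)) / 2 = - t" by (simp add: field_simps)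
      show ?thesis using feq[of "z+t" "z+t" "z+t" "z-t"] unfolding a1 a2 a3 a4 a5 a6 a7 a8
        by (simp add: algebra_simps)
    qed
    then show ?thesis unfolding A_def B_def BB_def k_def C_def PPP_def PP_def P_def N_def
      by (simp add: odd algebra_simps)
  qed
  have EE: "(\<lambda>t. A t * B t) = (\<lambda>t. k * C t - PPP t * N t)" by (intro ext E)
  have L: "(deriv ^^ 3) (\<lambda>t. A t * B t) 0 = 6 * f (2*z) * deriv f 0 ^ 3"
  proof -
    have "(deriv ^^ n) A x = (deriv ^^ n) f (x + 2*z)" for n x
      unfolding A_def using Dlin[OF entire, of n 1 "2*z" x] by simp
    then show ?thesis
      using M[OF hA hB, of 0] M[OF entire hBB, of 0] M[OF entire entire, of 0]
      unfolding B_def BB_def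
      by (simp add: f0 A_def numeral_3_eq_3 numeral_2_eq_2 BB_def)
  qed
  have R: "(deriv ^^ 3) (\<lambda>t. k * C t - PPP t * N t) 0 =
     6 * (f z ^ 3 * (deriv ^^ 3) f z - 3 * f z ^ 2 * deriv f z * (deriv ^^ 2) f z
      + 2 * f z * (deriv f z) ^ 3)"
  proof -
    have dC: "(deriv ^^ n) C x = 2^n * (deriv ^^ n) f (2*x + z)" for n x
      unfolding C_def using Dlin[OF entire, of n 2 z x] by simp
    have dP: "(deriv ^^ n) P x = (deriv ^^ n) f (x + z)" for n x
      unfolding P_def using Dlin[OF entire, of n 1 z x] by simp
    have dN: "(deriv ^^ n) N x = (-1)^n * (deriv ^^ n) f (z - x)" for n x
      unfolding N_def using Dlin[OF entire, of n "-1" z x] by simp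
    have F9: "(deriv ^^ 3) (\<lambda>t. k * C t - PPP t * N t) 0 =
       (deriv ^^ 3) (\<lambda>t. k * C t) 0 - (deriv ^^ 3) (\<lambda>t. PPP t * N t) 0"
      by (rule higher_deriv_diff[OF hkC hPN]) auto
    have F9': "(deriv ^^ 3) (\<lambda>t. k * C t) 0 = k * (deriv ^^ 3) C 0"
      using higher_deriv_cmult[OF hC, of 0 3 k] by simp
    have F10: "(deriv ^^ 3) C 0 = 8 * (deriv ^^ 3) f z"
      using dC[of 3 0] by simp
    have F: "P 0 = f z" "N 0 = f z" unfolding P_def N_def by simp_all
    have FP: "(deriv ^^ 1) P 0 = deriv f z" "(deriv ^^ 2) P 0 = (deriv ^^ 2) f z" "(deriv ^^ 3) P 0 = (deriv ^^ 3) f z"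
      using dP[of 1 0] dP[of 2 0] dP[of 3 0] by simp_all
    have FN: "(deriv ^^ 1) N 0 = - deriv f z" "(deriv ^^ 2) N 0 = (deriv ^^ 2) f z" "(deriv ^^ 3) N 0 = - (deriv ^^ 3) f z"
      using dN[of 1 0] dN[of 2 0] dN[of 3 0] by simp_all
    have pp: "PP 0 = f z ^ 2" "(deriv ^^ 1) PP 0 = 2 * f z * deriv f z"
      "(deriv ^^ 2) PP 0 = 2 * f z * (deriv ^^ 2) f z + 2 * deriv f z ^ 2"
      "(deriv ^^ 3) PP 0 = 2 * f z * (deriv ^^ 3) f z + 6 * deriv f z * (deriv ^^ 2) f z"
      unfolding PP_def using M[OF hP hP, of 0] F FP by (simp_all add: power2_eq_square)
    have ppp: "PPP 0 = f z ^ 3" "(deriv ^^ 1) PPP 0 = 3 * f z^2 * deriv f z"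
      "(deriv ^^ 2) PPP 0 = 3 * f z^2 * (deriv ^^ 2) f z + 6 * f z * deriv f z ^ 2"
      "(deriv ^^ 3) PPP 0 = 3 * f z^2 * (deriv ^^ 3) f z + 18 * f z * deriv f z * (deriv ^^ 2) f z + 6 * deriv f z ^ 3"
      unfolding PPP_def using M[OF hP hPP, of 0] F FP pp
      by (simp_all add: PP_def[symmetric] algebra_simps power2_eq_square power3_eq_cube)
    have q: "(deriv ^^ 3) (\<lambda>t. PPP t * N t) 0 = 
       2 * f z^3 * (deriv ^^ 3) f z + 18 * f z ^2 * deriv f z * (deriv ^^ 2) f z - 12 * f z * deriv f z ^ 3"
      using M(3)[OF hPPP hN, of 0] F FN ppp
      by (simp add: algebra_simps power2_eq_square power3_eq_cube)
    show ?thesis unfolding F9 F9' q F10 unfolding k_def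
      by (simp add: algebra_simps power2_eq_square power3_eq_cube)
  qed
  have "6 * f (2*z) * deriv f 0 ^ 3 = 6 * (f z ^ 3 * (deriv ^^ 3) f z - 3 * f z ^ 2 * deriv f z * (deriv ^^ 2) f z
      + 2 * f z * (deriv f z) ^ 3)"
    using L R EE by simp
  then have "6 * ((deriv f 0) ^ 3 * f (2 * z)) = 6 * (f z ^ 3 * (deriv ^^ 3) f z - 3 * f z ^ 2 * deriv f z * (deriv ^^ 2) f z
      + 2 * f z * (deriv f z) ^ 3)" by (simp only: mult_ac)
  then show "(deriv f 0) ^ 3 * f (2 * z) =
      f z ^ 3 * (deriv ^^ 3) f z - 3 * f z ^ 2 * deriv f z * (deriv ^^ 2) f z
      + 2 * f z * (deriv f z) ^ 3" using mult_left_cancel[of "6::complex"] by (metis zero_neq_numeral)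
qed

end
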